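(* Let $n\ge 2$ and let $\mu$ be a locally valid MV assignment of $M_{2,n}$ having exactly two flippable faces (i.e., a vertex of degree $2$ in ${\rm OFG}(M_{2,n})$). Let $-\mu$ be the opposite assignment, which negates every crease. Then the distance between $\mu$ and $-\mu$ in ${\rm OFG}(M_{2,n})$ (the length of a shortest path) is $\lceil n^2/2\rceil$.
   Context: The $2\times n$ Miura-ori $M_{2,n}$ ($n\ge1$) has faces $\alpha_{i,j}$ ($i\in\{1,2\}$, $j\in\{1,\dots,n\}$), interior vertices $x_1,\dots,x_{n-1}$, and creases $e_0$ and $e_{3k-1},e_{3k},e_{3k+1}$ ($k=1,\dots,n-1$). At $x_k$ the creases are left $e_{3k-3}$, top $e_{3k-1}$, right $e_{3k}$, bottom $e_{3k+1}$ (angles adjacent to the left crease obtuse). Face $\alpha_{1,j}$ is bordered by those of $e_{3j-4}$ (iff $j\ge2$), $e_{3j-3}$, $e_{3j-1}$ (iff $j\le n-1$); $\alpha_{2,j}$ by those of $e_{3j-2}$ (iff $j\ge2$), $e_{3j-3}$, $e_{3j+1}$ (iff $j\le n-1$). An MV assignment $\mu$ maps creases to $\{1,-1\}$; it is locally valid if for each $k$ exactly one of $\mu(e_{3k-1}),\mu(e_{3k}),\mu(e_{3k+1})$ differs from $\mu(e_{3k-3})$. The face flip $\mu_\alpha$ negates $\mu$ on the creases bordering $\alpha$; $\alpha$ is flippable under $\mu$ if $\mu,\mu_\alpha$ are both locally valid. ${\rm OFG}(M_{2,n})$ has the locally valid assignments as vertices, with $\mu\sim\mu_\alpha$ for each flippable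 $\alpha$. Two assignments are called opposite if they have the same flippable faces and opposite MV parity on every crease; for a locally valid $\mu$, $-\mu$ is locally valid and opposite to $\mu$. *)

theory Defs
  imports Complex_Main
begin

text \<open>Crease e_i is represented by the index i :: nat.
  Creases: e_0 and e_{3k-1}, e_{3k}, e_{3k+1} for k = 1..n-1.
  Faces alpha_{i,j} are represented by pairs (i,j), i in {1,2}, j in {1..n}.
  MV assignments are functions nat => int with values in {1,-1} on creases
  and the value 0 off the crease set (so that they are determined by their
  values on creases).\<close>

definition creases :: "nat \<Rightarrow> nat set" where
  "creases n = {0} \<union> (\<Union>k\<in>{1..n-1}. {3*k-1, 3*k, 3*k+1})"

definition faces :: "nat \<Rightarrow> (nat \<times> nat) set" where
  "faces n = {1,2} \<times> {1..n}"

definition face_creases :: "nat \<Rightarrow> nat \<times> nat \<Rightarrow> nat set" where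
  "face_creases n f = (case f of (i, j) \<Rightarrow>
     if i = 1 then
       (if j \<ge> 2 then {3*j-4} else {}) \<union> {3*j-3} \<union> (if j \<le> n-1 then {3*j-1} else {})
     else
       (if j \<ge> 2 then {3*j-2} else {}) \<union> {3*j-3} \<union> (if j \<le> n-1 then {3*j+1} else {}))"

definition mv_assignment :: "nat \<Rightarrow> (nat \<Rightarrow> int) \<Rightarrow> bool" where
  "mv_assignment n \<mu> \<longleftrightarrow>
     (\<forall>e\<in>creases n. \<mu> e = 1 \<or> \<mu> e = -1) \<and> (\<forall>e. e \<notin> creases n \<longrightarrow> \<mu> e = 0)"

definition locally_valid :: "nat \<Rightarrow> (nat \<Rightarrow> int) \<Rightarrow> bool" where
  "locally_valid n \<mu> \<longleftrightarrow> mv_assignment n \<mu> \<and>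
     (\<forall>k\<in>{1..n-1}. card {e\<in>{3*k-1, 3*k, 3*k+1}. \<mu> e \<noteq> \<mu> (3*k-3)} = 1)"

definition face_flip :: "nat \<Rightarrow> nat \<times> nat \<Rightarrow> (nat \<Rightarrow> int) \<Rightarrow> (nat \<Rightarrow> int)" where
  "face_flip n f \<mu> = (\<lambda>e. if e \<in> face_creases n f then - \<mu> e else \<mu> e)"

definition flippable :: "nat \<Rightarrow> (nat \<Rightarrow> int) \<Rightarrow> nat \<times> nat \<Rightarrow> bool" where
  "flippable n \<mu> f \<longleftrightarrow> f \<in> faces n \<and> locally_valid n \<mu> \<and> locally_valid n (face_flip n f \<mu>)"

definition ofg_edges :: "nat \<Rightarrow> ((nat \<Rightarrow> int) \<times> (nat \<Rightarrow> int)) set" where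
  "ofg_edges n = {(\<mu>, face_flip n f \<mu>) | \<mu> f. flippable n \<mu> f}"

definition ofg_dist :: "nat \<Rightarrow> (nat \<Rightarrow> int) \<Rightarrow> (nat \<Rightarrow> int) \<Rightarrow> nat" where
  "ofg_dist n \<mu> \<nu> = (LEAST k. (\<mu>, \<nu>) \<in> ofg_edges n ^^ k)"

end

theory Submission
  imports Defs
begin

lemma creases_iff: "c \<in> creases n \<longleftrightarrow> c = 0 \<or> (\<exists>m. m+2 \<le> n \<and> (c = 3*m+2 \<or> c = 3*m+3 \<or> c = 3*m+4))"
proof
  assume "c \<in> creases n"
  then consider "c = 0" | k where "1 \<le> k" "k \<le> n-1" "c = 3*k-1 \<or> c = 3*k \<or> c = 3*k+1"
    unfolding creases_def by auto
  then show "c = 0 \<or> (\<exists>m. m+2 \<le> n \<and> (c = 3*m+2 \<or> c = 3*m+3 \<or> c = 3*m+4))"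
  proof cases
    case 1 then show ?thesis by simp
  next
    case (2 k) then show ?thesis by (intro disjI2 exI[of _ "k-1"]) auto
  qed
next
  assume "c = 0 \<or> (\<exists>m. m+2 \<le> n \<and> (c = 3*m+2 \<or> c = 3*m+3 \<or> c = 3*m+4))"
  then show "c \<in> creases n"
  proof
    assume "c = 0" then show ?thesis by (simp add: creases_def)
  next
    assume "\<exists>m. m+2 \<le> n \<and> (c = 3*m+2 \<or> c = 3*m+3 \<or> c = 3*m+4)"
    then obtain m where "m+2 \<le> n" "c = 3*m+2 \<or> c = 3*m+3 \<or> c = 3*m+4" by auto
    then show ?thesis unfolding creases_def by (intro UnI2 UN_I[of "m+1"]) auto
  qed
qed

lemma t1: "3*(a::nat) \<noteq> 3*b+2" by presburger
lemma t2: "3*(a::nat) \<noteq> 3*b+4" by presburger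
lemma t3: "3*(a::nat)+1 \<noteq> 3*b+2" by presburger
lemma t4: "3*(a::nat)+1 \<noteq> 3*b+3" by presburger
lemma t5: "3*(a::nat)+2 \<noteq> 3*b+3" by presburger
lemma t6: "3*(a::nat)+2 \<noteq> 3*b+4" by presburger
lemma t7: "3*(a::nat)+1 \<noteq> 0" "3*(a::nat)+2 \<noteq> 0" by auto

lemma cr_0: "3*m \<in> creases n \<longleftrightarrow> m \<le> n-1"
  unfolding creases_iff
  apply (cases m)
   apply simp
  apply (rule iffI)
   apply (auto; presburger)
  apply (rule disjI2, rule_tac x="m-1" in exI, simp)
  done

lemma cr_1a: "3*m+1 \<in> creases n \<longleftrightarrow> 1 \<le> m \<and> m \<le> n-1"
  unfolding creases_iff
  apply (cases m)
   apply (simp; presburger)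
  apply (rule iffI)
   apply (auto; presburger)
  apply (rule disjI2, rule_tac x="m-1" in exI, simp)
  done

lemma cr_2a: "3*m+2 \<in> creases n \<longleftrightarrow> m+2 \<le> n"
  unfolding creases_iff
   apply (auto; presburger)
  done

lemma cr_1: "Suc (3*m) \<in> creases n \<longleftrightarrow> 1 \<le> m \<and> m \<le> n-1" using cr_1a[of m n] by simp
lemma cr_2: "Suc (Suc (3*m)) \<in> creases n \<longleftrightarrow> m+2 \<le> n" using cr_2a[of m n] by simp

lemma fc_cases: "j \<ge> 1 \<Longrightarrow> j = 1 \<or> (\<exists>j'. j = Suc (Suc j'))"
  by presburger

lemma fc_0: "j \<ge> 1 \<Longrightarrow> 3*m \<in> face_creases n (i,j) \<longleftrightarrow> j = m+1"
  unfolding face_creases_def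
  apply (drule fc_cases)
  apply (auto; presburger)
  done
lemma fc_1a: "j \<ge> 1 \<Longrightarrow> 3*m+1 \<in> face_creases n (i,j) \<longleftrightarrow> i \<noteq> 1 \<and> ((j = m+1 \<and> j \<ge> 2) \<or> (j = m \<and> j \<le> n-1))"
  unfolding face_creases_def
  apply (drule fc_cases)
  apply (auto; presburger)
  done
lemma fc_2a: "j \<ge> 1 \<Longrightarrow> 3*m+2 \<in> face_creases n (i,j) \<longleftrightarrow> i = 1 \<and> (j = m+2 \<or> (j = m+1 \<and> j \<le> n-1))"
  unfolding face_creases_def
  apply (drule fc_cases)
  apply (auto; presburger)
  done

lemma fc_1: "j \<ge> 1 \<Longrightarrow> Suc (3*m) \<in> face_creases n (i,j) \<longleftrightarrow> i \<noteq> 1 \<and> ((j = m+1 \<and> j \<ge> 2) \<or> (j = m \<and> j \<le> n-1))" using fc_1a[of j m n i] by simp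
lemma fc_2: "j \<ge> 1 \<Longrightarrow> Suc (Suc (3*m)) \<in> face_creases n (i,j) \<longleftrightarrow> i = 1 \<and> (j = m+2 \<or> (j = m+1 \<and> j \<le> n-1))" using fc_2a[of j m n i] by simp

definition sg :: "bool \<Rightarrow> int" where "sg b = (if b then -1 else 1)"

definition encp :: "(nat \<Rightarrow> int) \<Rightarrow> (nat \<times> nat \<Rightarrow> bool) \<Rightarrow> nat \<Rightarrow> int" where
 "encp \<mu>0 p c = \<mu>0 c * (if c mod 3 = 0 then sg (p (1, c div 3 + 1) \<noteq> p (2, c div 3 + 1))
    else if c mod 3 = 2 then sg (p (1, c div 3 + 1) \<noteq> p (1, c div 3 + 2))
    else sg (p (2, c div 3) \<noteq> p (2, c div 3 + 1)))"

lemma md3: "Suc (3*m) mod 3 = 1" "Suc (3*m) div 3 = m" "Suc (Suc (3*m)) mod 3 = 2" "Suc (Suc (3*m)) div 3 = m"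
  by (simp_all add: mod_Suc div_Suc)
lemma encp_0: "encp \<mu>0 p (3*m) = \<mu>0 (3*m) * sg (p (1, m+1) \<noteq> p (2, m+1))"
  unfolding encp_def by simp
lemma encp_1: "encp \<mu>0 p (Suc (3*m)) = \<mu>0 (Suc (3*m)) * sg (p (2, m) \<noteq> p (2, m+1))"
  unfolding encp_def by (simp add: md3)
lemma encp_2: "encp \<mu>0 p (Suc (Suc (3*m))) = \<mu>0 (Suc (Suc (3*m))) * sg (p (1, m+1) \<noteq> p (1, m+2))"
  unfolding encp_def by (simp add: md3)

lemma three_cases: fixes c :: nat obtains m where "c = 3*m" | m where "c = Suc (3*m)" | m where "c = Suc (Suc (3*m))"
proof -
  have "c mod 3 < 3" by simp
  then have "c mod 3 = 0 \<or> c mod 3 = 1 \<or> c mod 3 = 2" by linarith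
  moreover have "c = 3*(c div 3) + c mod 3" by simp
  moreover note e = calculation(2)
  ultimately show thesis
  proof (elim disjE)
    assume "c mod 3 = 0" then show thesis using that(1)[of "c div 3"] e by linarith
  next
    assume "c mod 3 = 1" then show thesis using that(2)[of "c div 3"] e by linarith
  next
    assume "c mod 3 = 2" then show thesis using that(3)[of "c div 3"] e by linarith
  qed
qed
lemma encp_flip:
  assumes f: "(i,j) \<in> faces n" and z: "\<forall>c. c \<notin> creases n \<longrightarrow> \<mu>0 c = 0"
    and hp: "\<forall>i'\<in>{1,2}. \<forall>j'. p' (i',j') = (if (i',j') = (i,j) then \<not> p (i',j') else p (i',j'))"
  shows "encp \<mu>0 p' = face_flip n (i,j) (encp \<mu>0 p)"
proof (rule ext)
  fix c
  have i: "i = 1 \<or> i = 2" and j: "1 \<le> j" "j \<le> n" using f by (auto simp: faces_def)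
  show "encp \<mu>0 p' c = face_flip n (i,j) (encp \<mu>0 p) c"
  proof (cases "c \<in> creases n")
    case False
    then show ?thesis using z by (simp add: face_flip_def encp_def)
  next
    case True
    show ?thesis
    proof (cases c rule: three_cases)
      case (1 m)
      then show ?thesis using True i j hp by (auto simp: face_flip_def encp_0 fc_0 sg_def)
    next
      case (2 m)
      then show ?thesis using True i j hp cr_1[of m n] by (auto simp: face_flip_def encp_1 fc_1 sg_def)
    next
      case (3 m)
      then show ?thesis using True i j hp cr_2[of m n] by (auto simp: face_flip_def encp_2 fc_2 sg_def)
    qed
  qed
qed

definition par :: "bool \<Rightarrow> (nat \<Rightarrow> int) \<Rightarrow> nat \<times> nat \<Rightarrow> bool" where
 "par tp \<Phi> f = (if (fst f = 1) = tp then \<Phi> (snd f) mod 4 \<in> {1,2} else \<Phi> (snd f) mod 4 \<in> {2,3})"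

definition enc :: "bool \<Rightarrow> (nat \<Rightarrow> int) \<Rightarrow> (nat \<Rightarrow> int) \<Rightarrow> nat \<Rightarrow> int" where
  "enc tp \<mu>0 \<Phi> = encp \<mu>0 (par tp \<Phi>)"

lemma mod4_cases: "(x::int) mod 4 = 0 \<or> x mod 4 = 1 \<or> x mod 4 = 2 \<or> x mod 4 = 3"
  by linarith

lemma togR:
  assumes r: "r = 0 \<or> r = 1 \<or> r = 2 \<or> r = (3::int)" and d: "d = 1 \<or> d = -1"
  shows "(((r+d) mod 4 \<in> {1,2}) \<noteq> (r \<in> {1,2})) = (even r = (d = 1))"
    and "(((r+d) mod 4 \<in> {2,3}) \<noteq> (r \<in> {2,3})) = (even r \<noteq> (d = 1))"
  using r d by (elim disjE; simp)+

lemma par_upd: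
  "par tp (\<Phi>(j := \<Phi> j + d)) (i',j') = (if j' = j then (if (i' = 1) = tp then (\<Phi> j mod 4 + d) mod 4 \<in> {1,2} else (\<Phi> j mod 4 + d) mod 4 \<in> {2,3}) else par tp \<Phi> (i',j'))"
  by (simp add: par_def mod_add_left_eq)

lemma togA:
  assumes "i = 1 \<or> i = 2"
  shows "\<exists>d\<in>{1,-1}. \<forall>i'\<in>{1,2}. \<forall>j'. par tp (\<Phi>(j := \<Phi> j + d)) (i',j') =
     (if (i',j') = (i,j) then \<not> par tp \<Phi> (i',j') else par tp \<Phi> (i',j'))"
proof -
  define r where "r = \<Phi> j mod 4"
  have r4: "r = 0 \<or> r = 1 \<or> r = 2 \<or> r = 3" unfolding r_def by (rule mod4_cases)
  define d where "d = (if ((i=1)=tp) = even r then 1 else (-1::int))"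
  have d: "d = 1 \<or> d = -1" unfolding d_def by simp
  note T = togR[OF r4 d]
  have "\<forall>i'\<in>{1,2}. \<forall>j'. par tp (\<Phi>(j := \<Phi> j + d)) (i',j') =
     (if (i',j') = (i,j) then \<not> par tp \<Phi> (i',j') else par tp \<Phi> (i',j'))"
  proof (intro ballI allI)
    fix i' j' assume i': "i' \<in> {1,2::nat}"
    show "par tp (\<Phi>(j := \<Phi> j + d)) (i',j') =
     (if (i',j') = (i,j) then \<not> par tp \<Phi> (i',j') else par tp \<Phi> (i',j'))"
      unfolding par_upd using i' assms T
      by (cases "j' = j") (auto simp: par_def r_def[symmetric] d_def split: if_splits)
  qed
  then show ?thesis using d by blast
qed

lemma togB:
  assumes d: "d = 1 \<or> d = -1"
  shows "\<exists>i\<in>{1,2}. \<forall>i'\<in>{1,2}. \<forall>j'. par tp (\<Phi>(j := \<Phi> j + d)) (i',j') =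
     (if (i',j') = (i,j) then \<not> par tp \<Phi> (i',j') else par tp \<Phi> (i',j'))"
proof -
  define r where "r = \<Phi> j mod 4"
  have r4: "r = 0 \<or> r = 1 \<or> r = 2 \<or> r = 3" unfolding r_def by (rule mod4_cases)
  define i where "i = (if ((even r) = (d = 1)) = tp then 1 else (2::nat))"
  note T = togR[OF r4 d]
  have "\<forall>i'\<in>{1,2}. \<forall>j'. par tp (\<Phi>(j := \<Phi> j + d)) (i',j') =
     (if (i',j') = (i,j) then \<not> par tp \<Phi> (i',j') else par tp \<Phi> (i',j'))"
  proof (intro ballI allI)
    fix i' j' assume i': "i' \<in> {1,2::nat}"
    show "par tp (\<Phi>(j := \<Phi> j + d)) (i',j') =
     (if (i',j') = (i,j) then \<not> par tp \<Phi> (i',j') else par tp \<Phi> (i',j'))"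
      unfolding par_upd using i' T
      by (cases "j' = j") (auto simp: par_def r_def[symmetric] i_def split: if_splits)
  qed
  then show ?thesis unfolding i_def by (intro bexI[of _ i]) (auto simp: i_def)
qed

lemma enc_flipA:
  assumes f: "(i,j) \<in> faces n" and z: "\<forall>c. c \<notin> creases n \<longrightarrow> \<mu>0 c = 0"
  shows "\<exists>d\<in>{1,-1}. enc tp \<mu>0 (\<Phi>(j := \<Phi> j + d)) = face_flip n (i,j) (enc tp \<mu>0 \<Phi>)"
proof -
  have "i = 1 \<or> i = 2" using f by (auto simp: faces_def)
  from togA[OF this, of tp \<Phi> j] obtain d where "d \<in> {1,-1}" and
    h: "\<forall>i'\<in>{1,2}. \<forall>j'. par tp (\<Phi>(j := \<Phi> j + d)) (i',j') =
     (if (i',j') = (i,j) then \<not> par tp \<Phi> (i',j') else par tp \<Phi> (i',j'))" by blast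
  then show ?thesis unfolding enc_def using encp_flip[OF f z h] by blast
qed

lemma enc_flipB:
  assumes j: "j \<in> {1..n}" and d: "d = 1 \<or> d = -1" and z: "\<forall>c. c \<notin> creases n \<longrightarrow> \<mu>0 c = 0"
  shows "\<exists>i\<in>{1,2}. enc tp \<mu>0 (\<Phi>(j := \<Phi> j + d)) = face_flip n (i,j) (enc tp \<mu>0 \<Phi>)"
proof -
  from togB[OF d, of tp \<Phi> j] obtain i where i: "i \<in> {1,2}" and
    h: "\<forall>i'\<in>{1,2}. \<forall>j'. par tp (\<Phi>(j := \<Phi> j + d)) (i',j') =
     (if (i',j') = (i,j) then \<not> par tp \<Phi> (i',j') else par tp \<Phi> (i',j'))" by blast
  have f: "(i,j) \<in> faces n" using i j by (auto simp: faces_def)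
  show ?thesis unfolding enc_def using encp_flip[OF f z h] i by blast
qed

definition startc :: "bool \<Rightarrow> nat \<Rightarrow> (nat \<Rightarrow> int) \<Rightarrow> bool" where
  "startc tp n \<mu>0 \<longleftrightarrow> mv_assignment n \<mu>0 \<and> (\<forall>k\<in>{1..n-1}.
     \<mu>0 (3*k-1) = (if tp then - \<mu>0 (3*k-3) else \<mu>0 (3*k-3)) \<and> \<mu>0 (3*k) = \<mu>0 (3*k-3) \<and>
     \<mu>0 (3*k+1) = (if tp then \<mu>0 (3*k-3) else - \<mu>0 (3*k-3)))"

lemma card3: "a \<noteq> b \<Longrightarrow> a \<noteq> c \<Longrightarrow> b \<noteq> c \<Longrightarrow>
  card {e\<in>{a,b,c}. P e} = of_bool (P a) + of_bool (P b) + of_bool (P c)"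
proof -
  assume d: "a \<noteq> b" "a \<noteq> c" "b \<noteq> c"
  have "{e\<in>{a,b,c}. P e} = (if P a then {a} else {}) \<union> (if P b then {b} else {}) \<union> (if P c then {c} else {})"
    by auto
  then show ?thesis using d by (cases "P a"; cases "P b"; cases "P c") simp_all
qed

lemma encp_sg: "\<exists>b. encp \<mu>0 p c = \<mu>0 c * sg b"
  unfolding encp_def by auto

lemma sg_cases: "sg b = 1 \<or> sg b = -1" by (simp add: sg_def)

lemma mv_enc: "mv_assignment n \<mu>0 \<Longrightarrow> mv_assignment n (enc tp \<mu>0 \<Phi>)"
  unfolding mv_assignment_def enc_def
proof (intro conjI ballI allI impI; elim conjE)
  fix c assume "\<forall>e\<in>creases n. \<mu>0 e = 1 \<or> \<mu>0 e = -1" "c \<in> creases n"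
  then have "\<mu>0 c = 1 \<or> \<mu>0 c = -1" by blast
  moreover obtain b where "encp \<mu>0 (par tp \<Phi>) c = \<mu>0 c * sg b" using encp_sg by blast
  ultimately show "encp \<mu>0 (par tp \<Phi>) c = 1 \<or> encp \<mu>0 (par tp \<Phi>) c = -1"
    by (auto simp: sg_def)
next
  fix c assume "\<forall>e. e \<notin> creases n \<longrightarrow> \<mu>0 e = 0" "c \<notin> creases n"
  then show "encp \<mu>0 (par tp \<Phi>) c = 0" by (simp add: encp_def)
qed

lemma vcore:
  fixes a b :: int
  assumes a: "a = 0 \<or> a = 1 \<or> a = 2 \<or> a = 3" and b: "b = 0 \<or> b = 1 \<or> b = 2 \<or> b = 3"
  shows "(of_bool (tp \<noteq> ((if tp then b \<in> {1,2} else b \<in> {2,3}) \<noteq> (if tp then a \<in> {2,3} else a \<in> {1,2})))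
        + of_bool (((if tp then a \<in> {1,2} else a \<in> {2,3}) \<noteq> (if tp then a \<in> {2,3} else a \<in> {1,2}))
             \<noteq> ((if tp then b \<in> {1,2} else b \<in> {2,3}) \<noteq> (if tp then b \<in> {2,3} else b \<in> {1,2})))
        + of_bool ((\<not> tp) \<noteq> ((if tp then b \<in> {2,3} else b \<in> {1,2}) \<noteq> (if tp then a \<in> {1,2} else a \<in> {2,3}))) = (1::nat))
     \<longleftrightarrow> (b - a) mod 4 \<noteq> 3"
  using a b by (cases tp; elim disjE; simp)

lemma sgeq: "s = 1 \<or> s = -1 \<Longrightarrow> (s * sg x \<noteq> s * sg y) = (x \<noteq> y)"
  "s = 1 \<or> s = -1 \<Longrightarrow> (- s * sg x \<noteq> s * sg y) = (x = y)"
  by (auto simp: sg_def)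

lemma vertex_iff:
  assumes st: "startc tp n \<mu>0" and k: "1 \<le> k" "k \<le> n-1"
  shows "card {e\<in>{3*k-1, 3*k, 3*k+1}. enc tp \<mu>0 \<Phi> e \<noteq> enc tp \<mu>0 \<Phi> (3*k-3)} = 1
     \<longleftrightarrow> (\<Phi> (Suc k) - \<Phi> k) mod 4 \<noteq> 3"
proof -
  obtain m where m: "k = Suc m" using k by (cases k) auto
  have mv: "mv_assignment n \<mu>0" and sv: "\<mu>0 (3*k-1) = (if tp then - \<mu>0 (3*k-3) else \<mu>0 (3*k-3))"
    "\<mu>0 (3*k) = \<mu>0 (3*k-3)" "\<mu>0 (3*k+1) = (if tp then \<mu>0 (3*k-3) else - \<mu>0 (3*k-3))"
    using st k by (auto simp: startc_def)
  have "3*m \<in> creases n" using cr_0[of m n] k m by simp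
  then have s: "\<mu>0 (3*k-3) = 1 \<or> \<mu>0 (3*k-3) = -1" using mv m by (auto simp: mv_assignment_def)
  have c1: "3*k-3 = 3*m" "3*k-1 = Suc (Suc (3*m))" "3*k+1 = Suc (3*k)" using m by auto
  have e0: "enc tp \<mu>0 \<Phi> (3*k-3) = \<mu>0 (3*k-3) * sg (par tp \<Phi> (1,k) \<noteq> par tp \<Phi> (2,k))"
  proof -
    have "enc tp \<mu>0 \<Phi> (3*m) = \<mu>0 (3*m) * sg (par tp \<Phi> (1,m+1) \<noteq> par tp \<Phi> (2,m+1))"
      by (simp only: enc_def encp_0)
    then show ?thesis using m by simp
  qed
  have e1: "enc tp \<mu>0 \<Phi> (3*k-1) = \<mu>0 (3*k-1) * sg (par tp \<Phi> (1,k) \<noteq> par tp \<Phi> (1,Suc k))"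
  proof -
    have "enc tp \<mu>0 \<Phi> (Suc (Suc (3*m))) = \<mu>0 (Suc (Suc (3*m))) * sg (par tp \<Phi> (1,m+1) \<noteq> par tp \<Phi> (1,m+2))"
      by (simp only: enc_def encp_2)
    then show ?thesis using m by simp
  qed
  have e2: "enc tp \<mu>0 \<Phi> (3*k) = \<mu>0 (3*k) * sg (par tp \<Phi> (1,Suc k) \<noteq> par tp \<Phi> (2,Suc k))"
  proof -
    have "enc tp \<mu>0 \<Phi> (3*k) = \<mu>0 (3*k) * sg (par tp \<Phi> (1,k+1) \<noteq> par tp \<Phi> (2,k+1))"
      by (simp only: enc_def encp_0)
    then show ?thesis by simp
  qed
  have e3: "enc tp \<mu>0 \<Phi> (3*k+1) = \<mu>0 (3*k+1) * sg (par tp \<Phi> (2,k) \<noteq> par tp \<Phi> (2,Suc k))"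
  proof -
    have "enc tp \<mu>0 \<Phi> (Suc (3*k)) = \<mu>0 (Suc (3*k)) * sg (par tp \<Phi> (2,k) \<noteq> par tp \<Phi> (2,k+1))"
      by (simp only: enc_def encp_1)
    then show ?thesis by simp
  qed
  have cd: "card {e\<in>{3*k-1, 3*k, 3*k+1}. enc tp \<mu>0 \<Phi> e \<noteq> enc tp \<mu>0 \<Phi> (3*k-3)} =
     of_bool (enc tp \<mu>0 \<Phi> (3*k-1) \<noteq> enc tp \<mu>0 \<Phi> (3*k-3)) + of_bool (enc tp \<mu>0 \<Phi> (3*k) \<noteq> enc tp \<mu>0 \<Phi> (3*k-3))
     + of_bool (enc tp \<mu>0 \<Phi> (3*k+1) \<noteq> enc tp \<mu>0 \<Phi> (3*k-3))"
    using k by (intro card3) auto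
  have dm: "(\<Phi> (Suc k) - \<Phi> k) mod 4 = (\<Phi> (Suc k) mod 4 - \<Phi> k mod 4) mod 4"
    by (simp add: mod_diff_eq)
  define PA where "PA = (if tp then \<Phi> k mod 4 \<in> {1,2} else \<Phi> k mod 4 \<in> {2,3})"
  define QA where "QA = (if tp then \<Phi> k mod 4 \<in> {2,3} else \<Phi> k mod 4 \<in> {1,2})"
  define PB where "PB = (if tp then \<Phi> (Suc k) mod 4 \<in> {1,2} else \<Phi> (Suc k) mod 4 \<in> {2,3})"
  define QB where "QB = (if tp then \<Phi> (Suc k) mod 4 \<in> {2,3} else \<Phi> (Suc k) mod 4 \<in> {1,2})"
  have pk: "par tp \<Phi> (1,k) = PA" "par tp \<Phi> (2,k) = QA" "par tp \<Phi> (1,Suc k) = PB" "par tp \<Phi> (2,Suc k) = QB"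
    unfolding PA_def QA_def PB_def QB_def par_def by simp_all
  have hT: "(enc tp \<mu>0 \<Phi> (3*k-1) \<noteq> enc tp \<mu>0 \<Phi> (3*k-3)) = (tp \<noteq> (PB \<noteq> QA))"
    unfolding e0 e1 sv pk using sgeq[OF s] by (cases tp) auto
  have hR: "(enc tp \<mu>0 \<Phi> (3*k) \<noteq> enc tp \<mu>0 \<Phi> (3*k-3)) = ((PA \<noteq> QA) \<noteq> (PB \<noteq> QB))"
    unfolding e0 e2 sv pk using sgeq[OF s] by auto
  have hB: "(enc tp \<mu>0 \<Phi> (3*k+1) \<noteq> enc tp \<mu>0 \<Phi> (3*k-3)) = ((\<not> tp) \<noteq> (QB \<noteq> PA))"
    unfolding e0 e3 sv pk using sgeq[OF s] by (cases tp) auto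
  show ?thesis
    unfolding cd hT hR hB dm PA_def QA_def PB_def QB_def
    by (rule vcore[OF mod4_cases mod4_cases])
qed

lemma valid_iff:
  assumes st: "startc tp n \<mu>0"
  shows "locally_valid n (enc tp \<mu>0 \<Phi>) \<longleftrightarrow> (\<forall>k\<in>{1..n-1}. (\<Phi> (Suc k) - \<Phi> k) mod 4 \<noteq> 3)"
  using vertex_iff[OF st] mv_enc st unfolding locally_valid_def startc_def by auto

definition okD :: "nat \<Rightarrow> (nat \<Rightarrow> int) \<Rightarrow> bool" where
  "okD n \<Phi> \<longleftrightarrow> (\<forall>k\<in>{1..n-1}. 0 \<le> \<Phi> (Suc k) - \<Phi> k \<and> \<Phi> (Suc k) - \<Phi> k \<le> 2)"

lemma okD_valid:
  assumes st: "startc tp n \<mu>0" and ok: "okD n \<Phi>"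
  shows "locally_valid n (enc tp \<mu>0 \<Phi>)"
  unfolding valid_iff[OF st]
proof
  fix k assume k: "k \<in> {1..n-1}"
  then have "0 \<le> \<Phi> (Suc k) - \<Phi> k" "\<Phi> (Suc k) - \<Phi> k \<le> 2" using ok by (auto simp: okD_def)
  then show "(\<Phi> (Suc k) - \<Phi> k) mod 4 \<noteq> 3" by simp
qed

lemma z_of_startc: "startc tp n \<mu>0 \<Longrightarrow> \<forall>c. c \<notin> creases n \<longrightarrow> \<mu>0 c = 0"
  by (simp add: startc_def mv_assignment_def)

lemma enc_zero: "enc tp \<mu>0 (\<lambda>_. 0) = \<mu>0"
  by (rule ext) (simp add: enc_def encp_def par_def sg_def)

lemma okD_upd:
  assumes ok: "okD n \<Phi>"
    and r: "1 \<le> j \<Longrightarrow> j \<le> n-1 \<Longrightarrow> 0 \<le> \<Phi> (Suc j) - (\<Phi> j + d) \<and> \<Phi> (Suc j) - (\<Phi> j + d) \<le> 2"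
    and l: "2 \<le> j \<Longrightarrow> j \<le> n \<Longrightarrow> 0 \<le> (\<Phi> j + d) - \<Phi> (j-1) \<and> (\<Phi> j + d) - \<Phi> (j-1) \<le> 2"
  shows "okD n (\<Phi>(j := \<Phi> j + d))"
  unfolding okD_def
proof
  fix k assume k: "k \<in> {1..n-1}"
  show "0 \<le> (\<Phi>(j := \<Phi> j + d)) (Suc k) - (\<Phi>(j := \<Phi> j + d)) k \<and> (\<Phi>(j := \<Phi> j + d)) (Suc k) - (\<Phi>(j := \<Phi> j + d)) k \<le> 2"
  proof (cases "k = j")
    case True then show ?thesis using r k by auto
  next
    case False
    show ?thesis
    proof (cases "Suc k = j")
      case True then show ?thesis using l[of] k by auto
    next
      case False2: False
      then show ?thesis using False ok k by (auto simp: okD_def)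
    qed
  qed
qed

lemma sum_upd_le:
  fixes g g' :: "nat \<Rightarrow> int"
  assumes j: "j \<in> A" and fin: "finite A" and h: "\<forall>x\<in>A. x \<noteq> j \<longrightarrow> g' x = g x"
  shows "sum g' A = sum g A + (g' j - g j)"
proof -
  have "sum g' A = g' j + sum g' (A - {j})" using sum.remove[OF fin j] by simp
  also have "sum g' (A - {j}) = sum g (A - {j})" using h by (intro sum.cong) auto
  also have "sum g A = g j + sum g (A - {j})" using sum.remove[OF fin j] by simp
  ultimately show ?thesis by (simp add: algebra_simps)
qed

lemma lower_walk:
  assumes st: "startc tp n \<mu>0"
  shows "(\<mu>0, \<nu>) \<in> ofg_edges n ^^ k \<Longrightarrow> \<exists>\<Phi>. \<nu> = enc tp \<mu>0 \<Phi> \<and> okD n \<Phi> \<and> (\<Sum>j\<in>{1..n}. \<bar>\<Phi> j\<bar>) \<le> int k"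
proof (induction k arbitrary: \<nu>)
  case 0
  then have "\<nu> = \<mu>0" by simp
  then show ?case by (intro exI[of _ "\<lambda>_. 0"]) (simp add: enc_zero okD_def)
next
  case (Suc k)
  from Suc.prems obtain y where y: "(\<mu>0, y) \<in> ofg_edges n ^^ k" and e: "(y, \<nu>) \<in> ofg_edges n"
    by (auto elim: relpow_Suc_E)
  from Suc.IH[OF y] obtain \<Phi> where \<Phi>: "y = enc tp \<mu>0 \<Phi>" "okD n \<Phi>" "(\<Sum>j\<in>{1..n}. \<bar>\<Phi> j\<bar>) \<le> int k"
    by blast
  from e obtain f where f: "\<nu> = face_flip n f y" "flippable n y f" unfolding ofg_edges_def by auto
  obtain i j where ij: "f = (i,j)" by (cases f)
  have fa: "(i,j) \<in> faces n" using f ij by (simp add: flippable_def)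
  then have j: "j \<in> {1..n}" by (auto simp: faces_def)
  from enc_flipA[OF fa z_of_startc[OF st], of tp \<Phi>] obtain d where d: "d = 1 \<or> d = -1"
    and ed: "enc tp \<mu>0 (\<Phi>(j := \<Phi> j + d)) = face_flip n (i,j) (enc tp \<mu>0 \<Phi>)" by blast
  define \<Phi>' where "\<Phi>' = \<Phi>(j := \<Phi> j + d)"
  have \<nu>: "\<nu> = enc tp \<mu>0 \<Phi>'" using ed f ij \<Phi> by (simp add: \<Phi>'_def)
  have lv: "locally_valid n \<nu>" using f ij by (simp add: flippable_def)
  have m3: "\<forall>k\<in>{1..n-1}. (\<Phi>' (Suc k) - \<Phi>' k) mod 4 \<noteq> 3" using lv \<nu> valid_iff[OF st] by simp
  have ok': "okD n \<Phi>'"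
    unfolding okD_def
  proof
    fix k assume k: "k \<in> {1..n-1}"
    have a: "0 \<le> \<Phi> (Suc k) - \<Phi> k" "\<Phi> (Suc k) - \<Phi> k \<le> 2" using \<Phi>(2) k by (auto simp: okD_def)
    have b: "\<Phi>' (Suc k) - \<Phi>' k \<ge> \<Phi> (Suc k) - \<Phi> k - 1 \<and> \<Phi>' (Suc k) - \<Phi>' k \<le> \<Phi> (Suc k) - \<Phi> k + 1"
      using d by (auto simp: \<Phi>'_def)
    have c: "(\<Phi>' (Suc k) - \<Phi>' k) mod 4 \<noteq> 3" using m3 k by blast
    have "\<Phi>' (Suc k) - \<Phi>' k \<noteq> -1" using c by auto
    moreover have "\<Phi>' (Suc k) - \<Phi>' k \<noteq> 3" using c by auto
    ultimately show "0 \<le> \<Phi>' (Suc k) - \<Phi>' k \<and> \<Phi>' (Suc k) - \<Phi>' k \<le> 2" using a b by linarith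
  qed
  have "(\<Sum>j\<in>{1..n}. \<bar>\<Phi>' j\<bar>) = (\<Sum>j\<in>{1..n}. \<bar>\<Phi> j\<bar>) + (\<bar>\<Phi>' j\<bar> - \<bar>\<Phi> j\<bar>)"
    by (rule sum_upd_le[OF j]) (auto simp: \<Phi>'_def)
  moreover have "\<bar>\<Phi>' j\<bar> - \<bar>\<Phi> j\<bar> \<le> 1" using d by (auto simp: \<Phi>'_def)
  ultimately have "(\<Sum>j\<in>{1..n}. \<bar>\<Phi>' j\<bar>) \<le> int (Suc k)" using \<Phi>(3) by simp
  then show ?case using \<nu> ok' by blast
qed


lemma mu_pm: "startc tp n \<mu>0 \<Longrightarrow> c \<in> creases n \<Longrightarrow> \<mu>0 c = 1 \<or> \<mu>0 c = -1"
  by (simp add: startc_def mv_assignment_def)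

lemma sg_neg: "x = 1 \<or> x = -1 \<Longrightarrow> x * sg b = - x \<Longrightarrow> b"
  by (cases b) (auto simp: sg_def)

lemma odd4: "(x::int) mod 4 = 1 \<or> x mod 4 = 3 \<Longrightarrow> odd x" by presburger

lemma neg_shape:
  assumes st: "startc tp n \<mu>0" and ok: "okD n \<Phi>" and e: "enc tp \<mu>0 \<Phi> = - \<mu>0"
  shows "\<forall>j\<in>{1..n}. \<Phi> j = \<Phi> 1 + 2 * (int j - 1)" "n \<ge> 1 \<Longrightarrow> odd (\<Phi> 1)"
proof -
  have r: "\<Phi> j mod 4 = 1 \<or> \<Phi> j mod 4 = 3" if j: "j \<in> {1..n}" for j
  proof -
    obtain m where m: "j = Suc m" using j by (cases j) auto
    have "3*m \<in> creases n" using cr_0[of m n] j m by simp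
    then have pm: "\<mu>0 (3*m) = 1 \<or> \<mu>0 (3*m) = -1" using mu_pm[OF st] by blast
    have "enc tp \<mu>0 \<Phi> (3*m) = - \<mu>0 (3*m)" using e by simp
    then have "\<mu>0 (3*m) * sg (par tp \<Phi> (1,m+1) \<noteq> par tp \<Phi> (2,m+1)) = - \<mu>0 (3*m)"
      by (simp only: enc_def encp_0)
    then have "par tp \<Phi> (1,j) \<noteq> par tp \<Phi> (2,j)" using sg_neg[OF pm] m by simp
    then show ?thesis using mod4_cases[of "\<Phi> j"] by (cases tp) (auto simp: par_def)
  qed
  have D: "\<Phi> (Suc k) - \<Phi> k = 2" if k: "k \<in> {1..n-1}" for k
  proof -
    obtain m where m: "k = Suc m" using k by (cases k) auto
    have "Suc (Suc (3*m)) \<in> creases n" using cr_2[of m n] k m by simp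
    then have pm: "\<mu>0 (Suc (Suc (3*m))) = 1 \<or> \<mu>0 (Suc (Suc (3*m))) = -1" using mu_pm[OF st] by blast
    have "enc tp \<mu>0 \<Phi> (Suc (Suc (3*m))) = - \<mu>0 (Suc (Suc (3*m)))" using e by simp
    then have "\<mu>0 (Suc (Suc (3*m))) * sg (par tp \<Phi> (1,m+1) \<noteq> par tp \<Phi> (1,m+2)) = - \<mu>0 (Suc (Suc (3*m)))"
      by (simp only: enc_def encp_2)
    then have ne: "par tp \<Phi> (1,k) \<noteq> par tp \<Phi> (1,Suc k)" using sg_neg[OF pm] m by simp
    have ra: "\<Phi> k mod 4 = 1 \<or> \<Phi> k mod 4 = 3" using r[of k] k by auto
    have rb: "\<Phi> (Suc k) mod 4 = 1 \<or> \<Phi> (Suc k) mod 4 = 3" using r[of "Suc k"] k by auto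
    have neq: "\<Phi> k mod 4 \<noteq> \<Phi> (Suc k) mod 4"
    proof
      assume "\<Phi> k mod 4 = \<Phi> (Suc k) mod 4"
      then have "par tp \<Phi> (1,k) = par tp \<Phi> (1,Suc k)" by (simp add: par_def)
      with ne show False by simp
    qed
    have "(\<Phi> (Suc k) - \<Phi> k) mod 4 = (\<Phi> (Suc k) mod 4 - \<Phi> k mod 4) mod 4" by (simp add: mod_diff_eq)
    also have "\<dots> = 2" using ra rb neq by auto
    finally have m2: "(\<Phi> (Suc k) - \<Phi> k) mod 4 = 2" .
    have "0 \<le> \<Phi> (Suc k) - \<Phi> k" "\<Phi> (Suc k) - \<Phi> k \<le> 2" using ok k by (auto simp: okD_def)
    moreover have "\<Phi> (Suc k) - \<Phi> k \<noteq> 0" "\<Phi> (Suc k) - \<Phi> k \<noteq> 1" using m2 by auto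
    ultimately show ?thesis by linarith
  qed
  show "\<forall>j\<in>{1..n}. \<Phi> j = \<Phi> 1 + 2 * (int j - 1)"
  proof
    fix j assume "j \<in> {1..n}"
    then show "\<Phi> j = \<Phi> 1 + 2 * (int j - 1)"
    proof (induction j)
      case 0 then show ?case by simp
    next
      case (Suc j)
      show ?case
      proof (cases "j = 0")
        case True then show ?thesis by simp
      next
        case False
        then have "j \<in> {1..n-1}" using Suc.prems by auto
        then have "\<Phi> (Suc j) = \<Phi> j + 2" using D by force
        moreover have "\<Phi> j = \<Phi> 1 + 2 * (int j - 1)" using Suc False by auto
        ultimately show ?thesis by simp
      qed
    qed
  qed
  show "n \<ge> 1 \<Longrightarrow> odd (\<Phi> 1)"
  proof -
    assume "n \<ge> 1"
    then have "\<Phi> 1 mod 4 = 1 \<or> \<Phi> 1 mod 4 = 3" using r by auto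
    then show "odd (\<Phi> 1)" using odd4 by blast
  qed
qed

definition F :: "nat \<Rightarrow> int \<Rightarrow> int" where "F n C = (\<Sum>j<n. \<bar>C + 2 * int j\<bar>)"

lemma F_Suc2: "F (Suc (Suc n)) C = \<bar>C\<bar> + F n (C+2) + \<bar>C + 2 * int n + 2\<bar>"
proof -
  have "F (Suc (Suc n)) C = (\<Sum>j<Suc n. \<bar>C + 2 * int j\<bar>) + \<bar>C + 2 * int (Suc n)\<bar>"
    unfolding F_def by simp
  also have "(\<Sum>j<Suc n. \<bar>C + 2 * int j\<bar>) = \<bar>C\<bar> + (\<Sum>j<n. \<bar>C + 2 * int (Suc j)\<bar>)"
    by (subst sum.lessThan_Suc_shift) simp
  also have "(\<Sum>j<n. \<bar>C + 2 * int (Suc j)\<bar>) = F n (C+2)"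
    unfolding F_def by (intro sum.cong) (auto simp: algebra_simps)
  finally show ?thesis by (simp add: algebra_simps)
qed

lemma F_lower: "odd C \<Longrightarrow> int n * int n \<le> 2 * F n C"
proof (induction n arbitrary: C rule: less_induct)
  case (less n)
  show ?case
  proof (cases n)
    case 0 then show ?thesis by (simp add: F_def)
  next
    case (Suc n1)
    show ?thesis
    proof (cases n1)
      case 0
      have "C \<noteq> 0" using less.prems by auto
      then show ?thesis using Suc 0 by (simp add: F_def)
    next
      case (Suc n2)
      have ih: "int n2 * int n2 \<le> 2 * F n2 (C+2)" using less.IH[of n2 "C+2"] less.prems Suc \<open>n = Suc n1\<close> by simp
      have "\<bar>C\<bar> + \<bar>C + 2 * int n2 + 2\<bar> \<ge> 2 * int n2 + 2" by linarith
      then show ?thesis using ih F_Suc2[of n2 C] Suc \<open>n = Suc n1\<close> by (simp add: algebra_simps)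
    qed
  qed
qed

lemma F_upper: "2 * F n (1 - 2 * int (n div 2)) \<le> int n * int n + 1"
proof (induction n rule: less_induct)
  case (less n)
  show ?case
  proof (cases n)
    case 0 then show ?thesis by (simp add: F_def)
  next
    case (Suc n1)
    show ?thesis
    proof (cases n1)
      case 0
      then show ?thesis using Suc by (simp add: F_def)
    next
      case (Suc n2)
      have nn: "n = Suc (Suc n2)" using Suc \<open>n = Suc n1\<close> by simp
      have ih: "2 * F n2 (1 - 2 * int (n2 div 2)) \<le> int n2 * int n2 + 1" using less.IH[of n2] nn by simp
      have dv: "int (n div 2) = int (n2 div 2) + 1" using nn by simp
      have h2: "int (n2 div 2) * 2 \<le> int n2" by linarith
      have A: "F n (1 - 2 * int (n div 2)) = \<bar>1 - 2 * int (n div 2)\<bar> + F n2 (1 - 2 * int (n div 2) + 2)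
            + \<bar>1 - 2 * int (n div 2) + 2 * int n2 + 2\<bar>" using F_Suc2 nn by simp
      have B: "1 - 2 * int (n div 2) + 2 = 1 - 2 * int (n2 div 2)" using dv by simp
      have C: "\<bar>1 - 2 * int (n div 2)\<bar> + \<bar>1 - 2 * int (n div 2) + 2 * int n2 + 2\<bar> = 2 * int n2 + 2"
        using dv h2 by simp
      have "int n * int n = int n2 * int n2 + 4 * int n2 + 4" using nn by (simp add: algebra_simps)
      moreover have "\<And>X Y Z W::int. W = X + Z + Y \<Longrightarrow> X + Y = 2*int n2 + 2 \<Longrightarrow> W = Z + (2*int n2+2)" by simp
      note A' = this[OF A[unfolded B] C]
      ultimately show ?thesis using ih by linarith
    qed
  qed
qed

lemma sum_F: "(\<Sum>j\<in>{1..n}. \<bar>C + 2 * (int j - 1)\<bar>) = F n C"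
proof (induction n)
  case 0 then show ?case by (simp add: F_def)
next
  case (Suc n)
  have "(\<Sum>j\<in>{1..Suc n}. \<bar>C + 2 * (int j - 1)\<bar>) = (\<Sum>j\<in>{1..n}. \<bar>C + 2 * (int j - 1)\<bar>) + \<bar>C + 2 * int n\<bar>"
    by (simp add: sum.cl_ivl_Suc)
  then show ?case using Suc by (simp add: F_def)
qed

lemma enc_cong:
  assumes z: "\<forall>c. c \<notin> creases n \<longrightarrow> \<mu>0 c = 0" and h: "\<forall>j\<in>{1..n}. \<Phi> j = \<Psi> j" and n1: "n \<ge> 1"
  shows "enc tp \<mu>0 \<Phi> = enc tp \<mu>0 \<Psi>"
proof (rule ext)
  fix c
  have pe: "par tp \<Phi> (i,j) = par tp \<Psi> (i,j)" if "j \<in> {1..n}" for i j using h that by (simp add: par_def)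
  show "enc tp \<mu>0 \<Phi> c = enc tp \<mu>0 \<Psi> c"
  proof (cases "c \<in> creases n")
    case False then show ?thesis using z by (simp add: enc_def encp_def)
  next
    case True
    show ?thesis
    proof (cases c rule: three_cases)
      case (1 m)
      then have "m \<le> n-1" using True cr_0 by simp
      then have "Suc m \<in> {1..n}" using n1 by auto
      then show ?thesis using 1 pe by (simp add: enc_def encp_0)
    next
      case (2 m)
      then have "1 \<le> m \<and> m \<le> n-1" using True cr_1 by simp
      then have "m \<in> {1..n}" "Suc m \<in> {1..n}" by auto
      then show ?thesis using 2 pe by (simp add: enc_def encp_1)
    next
      case (3 m)
      then have "m + 2 \<le> n" using True cr_2 by simp
      then have "Suc m \<in> {1..n}" "Suc (Suc m) \<in> {1..n}" by auto
      then show ?thesis using 3 pe by (simp add: enc_def encp_2)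
    qed
  qed
qed

lemma move_up:
  assumes okP: "okD n \<Phi>" and okQ: "okD n \<Psi>" and ne: "S \<noteq> {}"
    and S: "S = {j\<in>{1..n}. \<Phi> j < \<Psi> j}"
  shows "\<exists>j\<in>{1..n}. okD n (\<Phi>(j := \<Phi> j + 1)) \<and> \<bar>\<Phi> j + 1 - \<Psi> j\<bar> + 1 = \<bar>\<Phi> j - \<Psi> j\<bar>"
proof -
  have fS: "finite S" using S by simp
  define v where "v = Min (\<Phi> ` S)"
  have vin: "v \<in> \<Phi> ` S" unfolding v_def using fS ne by (intro Min_in) auto
  have vle: "\<And>x. x \<in> S \<Longrightarrow> v \<le> \<Phi> x" unfolding v_def using fS by (intro Min_le) auto
  define S2 where "S2 = {j\<in>S. \<Phi> j = v}"
  have fS2: "finite S2" using fS S2_def by simp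
  have ne2: "S2 \<noteq> {}" using vin S2_def by auto
  define j where "j = Max S2"
  have jS2: "j \<in> S2" unfolding j_def using fS2 ne2 by (rule Max_in)
  have jmax: "\<And>x. x \<in> S2 \<Longrightarrow> x \<le> j" unfolding j_def using fS2 by (intro Max_ge) auto
  have jS: "j \<in> S" and jv: "\<Phi> j = v" using jS2 S2_def by auto
  have j1: "j \<in> {1..n}" and jl: "\<Phi> j < \<Psi> j" using jS S by auto
  have ok': "okD n (\<Phi>(j := \<Phi> j + 1))"
  proof (rule okD_upd[OF okP])
    assume a: "1 \<le> j" "j \<le> n-1"
    have b: "0 \<le> \<Phi> (Suc j) - \<Phi> j" "\<Phi> (Suc j) - \<Phi> j \<le> 2" using okP a by (auto simp: okD_def)
    have c: "\<Psi> j \<le> \<Psi> (Suc j)" using okQ a by (auto simp: okD_def)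
    have "\<Phi> (Suc j) \<noteq> \<Phi> j"
    proof
      assume eq: "\<Phi> (Suc j) = \<Phi> j"
      then have "Suc j \<in> S" using S a c jl by auto
      then have "Suc j \<in> S2" using eq jv S2_def by auto
      then show False using jmax by fastforce
    qed
    then show "0 \<le> \<Phi> (Suc j) - (\<Phi> j + 1) \<and> \<Phi> (Suc j) - (\<Phi> j + 1) \<le> 2" using b by auto
  next
    assume a: "2 \<le> j" "j \<le> n"
    obtain k where k: "j = Suc k" using a by (cases j) auto
    have kr: "k \<in> {1..n-1}" using a k by auto
    have b: "0 \<le> \<Phi> j - \<Phi> k" "\<Phi> j - \<Phi> k \<le> 2" using okP kr k by (auto simp: okD_def)
    have c: "\<Psi> j - \<Psi> k \<le> 2" using okQ kr k by (auto simp: okD_def)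
    have "\<Phi> k \<noteq> \<Phi> j - 2"
    proof
      assume eq: "\<Phi> k = \<Phi> j - 2"
      then have "k \<in> S" using S kr c jl by auto
      then have "v \<le> \<Phi> k" by (rule vle)
      then show False using eq jv by simp
    qed
    then show "0 \<le> \<Phi> j + 1 - \<Phi> (j-1) \<and> \<Phi> j + 1 - \<Phi> (j-1) \<le> 2" using b k by auto
  qed
  moreover have "\<bar>\<Phi> j + 1 - \<Psi> j\<bar> + 1 = \<bar>\<Phi> j - \<Psi> j\<bar>" using jl by simp
  ultimately show ?thesis using j1 by blast
qed

lemma move_down:
  assumes okP: "okD n \<Phi>" and okQ: "okD n \<Psi>" and ne: "S \<noteq> {}"
    and S: "S = {j\<in>{1..n}. \<Phi> j > \<Psi> j}"
  shows "\<exists>j\<in>{1..n}. okD n (\<Phi>(j := \<Phi> j + -1)) \<and> \<bar>\<Phi> j + -1 - \<Psi> j\<bar> + 1 = \<bar>\<Phi> j - \<Psi> j\<bar>"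
proof -
  have fS: "finite S" using S by simp
  define v where "v = Max (\<Phi> ` S)"
  have vin: "v \<in> \<Phi> ` S" unfolding v_def using fS ne by (intro Max_in) auto
  have vle: "\<And>x. x \<in> S \<Longrightarrow> \<Phi> x \<le> v" unfolding v_def using fS by (intro Max_ge) auto
  define S2 where "S2 = {j\<in>S. \<Phi> j = v}"
  have fS2: "finite S2" using fS S2_def by simp
  have ne2: "S2 \<noteq> {}" using vin S2_def by auto
  define j where "j = Min S2"
  have jS2: "j \<in> S2" unfolding j_def using fS2 ne2 by (rule Min_in)
  have jmin: "\<And>x. x \<in> S2 \<Longrightarrow> j \<le> x" unfolding j_def using fS2 by (intro Min_le) auto
  have jS: "j \<in> S" and jv: "\<Phi> j = v" using jS2 S2_def by auto
  have j1: "j \<in> {1..n}" and jl: "\<Phi> j > \<Psi> j" using jS S by auto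
  have ok': "okD n (\<Phi>(j := \<Phi> j + -1))"
  proof (rule okD_upd[OF okP])
    assume a: "1 \<le> j" "j \<le> n-1"
    have b: "0 \<le> \<Phi> (Suc j) - \<Phi> j" "\<Phi> (Suc j) - \<Phi> j \<le> 2" using okP a by (auto simp: okD_def)
    have c: "\<Psi> (Suc j) - \<Psi> j \<le> 2" using okQ a by (auto simp: okD_def)
    have "\<Phi> (Suc j) \<noteq> \<Phi> j + 2"
    proof
      assume eq: "\<Phi> (Suc j) = \<Phi> j + 2"
      then have "Suc j \<in> S" using S a c jl by auto
      then have "\<Phi> (Suc j) \<le> v" by (rule vle)
      then show False using eq jv by simp
    qed
    then show "0 \<le> \<Phi> (Suc j) - (\<Phi> j + -1) \<and> \<Phi> (Suc j) - (\<Phi> j + -1) \<le> 2" using b by auto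
  next
    assume a: "2 \<le> j" "j \<le> n"
    obtain k where k: "j = Suc k" using a by (cases j) auto
    have kr: "k \<in> {1..n-1}" using a k by auto
    have b: "0 \<le> \<Phi> j - \<Phi> k" "\<Phi> j - \<Phi> k \<le> 2" using okP kr k by (auto simp: okD_def)
    have c: "\<Psi> k \<le> \<Psi> j" using okQ kr k by (auto simp: okD_def)
    have "\<Phi> k \<noteq> \<Phi> j"
    proof
      assume eq: "\<Phi> k = \<Phi> j"
      then have "k \<in> S" using S kr c jl by auto
      then have "k \<in> S2" using eq jv S2_def by auto
      then have "j \<le> k" by (rule jmin)
      then show False using k by simp
    qed
    then show "0 \<le> \<Phi> j + -1 - \<Phi> (j-1) \<and> \<Phi> j + -1 - \<Phi> (j-1) \<le> 2" using b k by auto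
  qed
  moreover have "\<bar>\<Phi> j + -1 - \<Psi> j\<bar> + 1 = \<bar>\<Phi> j - \<Psi> j\<bar>" using jl by simp
  ultimately show ?thesis using j1 by blast
qed

lemma move:
  assumes okP: "okD n \<Phi>" and okQ: "okD n \<Psi>" and j0: "j0 \<in> {1..n}" "\<Phi> j0 \<noteq> \<Psi> j0"
  shows "\<exists>j\<in>{1..n}. \<exists>d. (d = 1 \<or> d = -1) \<and> okD n (\<Phi>(j := \<Phi> j + d)) \<and> \<bar>\<Phi> j + d - \<Psi> j\<bar> + 1 = \<bar>\<Phi> j - \<Psi> j\<bar>"
proof (cases "{j\<in>{1..n}. \<Phi> j < \<Psi> j} = {}")
  case False
  from move_up[OF okP okQ False refl] show ?thesis by blast
next
  case True
  then have "\<Phi> j0 > \<Psi> j0" using j0 by auto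
  then have "{j\<in>{1..n}. \<Phi> j > \<Psi> j} \<noteq> {}" using j0 by auto
  from move_down[OF okP okQ this refl] show ?thesis by blast
qed

lemma edge:
  assumes st: "startc tp n \<mu>0" and ok: "okD n \<Phi>" and ok': "okD n (\<Phi>(j := \<Phi> j + d))"
    and j: "j \<in> {1..n}" and d: "d = 1 \<or> d = -1"
  shows "(enc tp \<mu>0 \<Phi>, enc tp \<mu>0 (\<Phi>(j := \<Phi> j + d))) \<in> ofg_edges n"
proof -
  from enc_flipB[OF j d z_of_startc[OF st], of tp \<Phi>] obtain i where i: "i \<in> {1,2}"
    and e: "enc tp \<mu>0 (\<Phi>(j := \<Phi> j + d)) = face_flip n (i,j) (enc tp \<mu>0 \<Phi>)" by blast
  have "flippable n (enc tp \<mu>0 \<Phi>) (i,j)"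
    unfolding flippable_def using i j okD_valid[OF st ok] okD_valid[OF st ok'] e by (auto simp: faces_def)
  then show ?thesis unfolding ofg_edges_def using e by auto
qed

lemma path:
  assumes st: "startc tp n \<mu>0" and okQ: "okD n \<Psi>" and n1: "n \<ge> 1"
  shows "okD n \<Phi> \<Longrightarrow> nat (\<Sum>j\<in>{1..n}. \<bar>\<Phi> j - \<Psi> j\<bar>) = N \<Longrightarrow> (enc tp \<mu>0 \<Phi>, enc tp \<mu>0 \<Psi>) \<in> ofg_edges n ^^ N"
proof (induction N arbitrary: \<Phi>)
  case 0
  have "(\<Sum>j\<in>{1..n}. \<bar>\<Phi> j - \<Psi> j\<bar>) \<le> 0" using 0 by simp
  moreover have "(\<Sum>j\<in>{1..n}. \<bar>\<Phi> j - \<Psi> j\<bar>) \<ge> 0" by (intro sum_nonneg) auto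
  ultimately have "(\<Sum>j\<in>{1..n}. \<bar>\<Phi> j - \<Psi> j\<bar>) = 0" by linarith
  then have "\<forall>j\<in>{1..n}. \<bar>\<Phi> j - \<Psi> j\<bar> = 0" by (subst (asm) sum_nonneg_eq_0_iff) auto
  then have "enc tp \<mu>0 \<Phi> = enc tp \<mu>0 \<Psi>" by (intro enc_cong[OF z_of_startc[OF st] _ n1]) auto
  then show ?case by simp
next
  case (Suc N)
  have s0: "(\<Sum>j\<in>{1..n}. \<bar>\<Phi> j - \<Psi> j\<bar>) \<noteq> 0" using Suc.prems by auto
  have "\<not> (\<forall>j\<in>{1..n}. \<Phi> j = \<Psi> j)"
  proof
    assume "\<forall>j\<in>{1..n}. \<Phi> j = \<Psi> j"
    then have "(\<Sum>j\<in>{1..n}. \<bar>\<Phi> j - \<Psi> j\<bar>) = 0" by simp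
    with s0 show False by simp
  qed
  then obtain j0 where j0: "j0 \<in> {1..n}" "\<Phi> j0 \<noteq> \<Psi> j0" by blast
  from move[OF Suc.prems(1) okQ j0] obtain j d where j: "j \<in> {1..n}" and d: "d = 1 \<or> d = -1"
    and ok': "okD n (\<Phi>(j := \<Phi> j + d))" and ab: "\<bar>\<Phi> j + d - \<Psi> j\<bar> + 1 = \<bar>\<Phi> j - \<Psi> j\<bar>" by blast
  define \<Phi>' where "\<Phi>' = \<Phi>(j := \<Phi> j + d)"
  have "(\<Sum>j\<in>{1..n}. \<bar>\<Phi>' j - \<Psi> j\<bar>) = (\<Sum>j\<in>{1..n}. \<bar>\<Phi> j - \<Psi> j\<bar>) + (\<bar>\<Phi>' j - \<Psi> j\<bar> - \<bar>\<Phi> j - \<Psi> j\<bar>)"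
    by (rule sum_upd_le[OF j]) (auto simp: \<Phi>'_def)
  then have "(\<Sum>j\<in>{1..n}. \<bar>\<Phi>' j - \<Psi> j\<bar>) = (\<Sum>j\<in>{1..n}. \<bar>\<Phi> j - \<Psi> j\<bar>) - 1"
    using ab by (simp add: \<Phi>'_def)
  then have "nat (\<Sum>j\<in>{1..n}. \<bar>\<Phi>' j - \<Psi> j\<bar>) = N" using Suc.prems(2) by simp
  from Suc.IH[OF ok'[folded \<Phi>'_def] this] have "(enc tp \<mu>0 \<Phi>', enc tp \<mu>0 \<Psi>) \<in> ofg_edges n ^^ N" .
  moreover have "(enc tp \<mu>0 \<Phi>, enc tp \<mu>0 \<Phi>') \<in> ofg_edges n"
    unfolding \<Phi>'_def by (rule edge[OF st Suc.prems(1) ok' j d])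
  ultimately show ?case by (rule relpow_Suc_I2[rotated])
qed

lemma oddm: "odd (x::int) \<Longrightarrow> x mod 4 = 1 \<or> x mod 4 = 3"
proof -
  assume o: "odd x"
  have "x mod 2 = (x mod 4) mod 2" by (rule mod_mod_cancel[symmetric]) simp
  moreover have "x mod 2 = 1" using o by (simp add: odd_iff_mod_2_eq_one)
  ultimately show ?thesis using mod4_cases[of x] by auto
qed
lemma m42: "((x::int) + 2) mod 4 = (x mod 4 + 2) mod 4" by (simp add: mod_add_left_eq)
lemma pr1: "r = 1 \<or> r = (3::int) \<Longrightarrow> (r \<in> {1,2}) \<noteq> (r \<in> {2,3})" by auto
lemma pr2: "r = 1 \<or> r = (3::int) \<Longrightarrow> (r \<in> {1,2}) \<noteq> ((r+2) mod 4 \<in> {1,2})" by auto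
lemma pr3: "r = 1 \<or> r = (3::int) \<Longrightarrow> (r \<in> {2,3}) \<noteq> ((r+2) mod 4 \<in> {2,3})" by auto
lemma pd1: "odd (x::int) \<Longrightarrow> (x mod 4 \<in> {1,2}) \<noteq> (x mod 4 \<in> {2,3})"
  by (rule pr1[OF oddm])
lemma pd2: "odd (x::int) \<Longrightarrow> (x mod 4 \<in> {1,2}) \<noteq> ((x+2) mod 4 \<in> {1,2})"
  unfolding m42[of x] by (rule pr2[OF oddm])
lemma pd3: "odd (x::int) \<Longrightarrow> (x mod 4 \<in> {2,3}) \<noteq> ((x+2) mod 4 \<in> {2,3})"
  unfolding m42[of x] by (rule pr3[OF oddm])

lemma par_T1:
  assumes "odd (T j)"
  shows "par tp T (1,j) \<noteq> par tp T (2,j)"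
proof (cases tp)
  case True then show ?thesis using pd1[OF assms] by (simp add: par_def)
next
  case False then show ?thesis using pd1[OF assms] by (simp add: par_def)
qed

lemma par_T2:
  assumes "odd (T j)" and TS: "T (Suc j) = T j + 2" and i: "i = 1 \<or> i = 2"
  shows "par tp T (i,j) \<noteq> par tp T (i,Suc j)"
proof -
  have a: "par tp T (i,j) = (if (i = 1) = tp then T j mod 4 \<in> {1,2} else T j mod 4 \<in> {2,3})"
    by (simp add: par_def)
  have b: "par tp T (i,Suc j) = (if (i = 1) = tp then (T j + 2) mod 4 \<in> {1,2} else (T j + 2) mod 4 \<in> {2,3})"
    by (simp add: par_def TS)
  show ?thesis unfolding a b using pd2[OF assms(1)] pd3[OF assms(1)] by simp
qed

lemma enc_target:
  assumes st: "startc tp n \<mu>0" and od: "odd C"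
  shows "enc tp \<mu>0 (\<lambda>j. C + 2 * (int j - 1)) = - \<mu>0"
proof -
  define T where "T = (\<lambda>j::nat. C + 2 * (int j - 1))"
  have To: "odd (T j)" for j using od unfolding T_def by simp
  have TS: "T (Suc j) = T j + 2" for j unfolding T_def by simp
  have "enc tp \<mu>0 T c = - \<mu>0 c" for c
  proof (cases c rule: three_cases)
    case (1 m)
    have "par tp T (1,m+1) \<noteq> par tp T (2,m+1)" by (rule par_T1[of T, OF To])
    then show ?thesis unfolding 1 enc_def encp_0 by (simp add: sg_def)
  next
    case (2 m)
    have "par tp T (2,m) \<noteq> par tp T (2,Suc m)" by (rule par_T2[of T, OF To TS]) simp
    then show ?thesis unfolding 2 enc_def encp_1 by (simp add: sg_def)
  next
    case (3 m)
    have "par tp T (1,Suc m) \<noteq> par tp T (1,Suc (Suc m))" by (rule par_T2[of T, OF To TS]) simp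
    then show ?thesis unfolding 3 enc_def encp_2 by (simp add: sg_def)
  qed
  then show ?thesis unfolding T_def by auto
qed

lemma main_tp:
  assumes n2: "n \<ge> 2" and st: "startc tp n \<mu>"
  shows "(\<exists>k. (\<mu>, - \<mu>) \<in> ofg_edges n ^^ k)
         \<and> ofg_dist n \<mu> (- \<mu>) = nat \<lceil>(real n)^2 / 2\<rceil>"
proof -
  define C0 where "C0 = 1 - 2 * int (n div 2)"
  have oC0: "odd C0" unfolding C0_def by simp
  define T where "T = (\<lambda>j::nat. C0 + 2 * (int j - 1))"
  have okT: "okD n T" unfolding okD_def T_def by auto
  have ok0: "okD n (\<lambda>_. 0)" unfolding okD_def by auto
  have eT: "enc tp \<mu> T = - \<mu>" unfolding T_def by (rule enc_target[OF st oC0])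
  have sT: "(\<Sum>j\<in>{1..n}. \<bar>0 - T j\<bar>) = F n C0"
  proof -
    have "(\<Sum>j\<in>{1..n}. \<bar>0 - T j\<bar>) = (\<Sum>j\<in>{1..n}. \<bar>C0 + 2 * (int j - 1)\<bar>)"
      unfolding T_def by (intro sum.cong refl) (simp only: diff_0 abs_minus_cancel)
    then show ?thesis using sum_F[of C0 n] by simp
  qed
  define N where "N = nat (F n C0)"
  have n1: "n \<ge> 1" using n2 by simp
  have "(enc tp \<mu> (\<lambda>_. 0), enc tp \<mu> T) \<in> ofg_edges n ^^ N"
    by (rule path[OF st okT n1 ok0]) (use sT in \<open>simp add: N_def\<close>)
  then have pth: "(\<mu>, - \<mu>) \<in> ofg_edges n ^^ N" using enc_zero[of tp \<mu>] eT by simp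
  have lowb: "N \<le> k" if k: "(\<mu>, - \<mu>) \<in> ofg_edges n ^^ k" for k
  proof -
    from lower_walk[OF st k] obtain \<Phi> where \<Phi>1: "- \<mu> = enc tp \<mu> \<Phi>" and \<Phi>2: "okD n \<Phi>"
      and \<Phi>3: "(\<Sum>j\<in>{1..n}. \<bar>\<Phi> j\<bar>) \<le> int k" by blast
    have e: "enc tp \<mu> \<Phi> = - \<mu>" using \<Phi>1 by simp
    have sh: "\<forall>j\<in>{1..n}. \<Phi> j = \<Phi> 1 + 2 * (int j - 1)" by (rule neg_shape(1)[OF st \<Phi>2 e])
    have o: "odd (\<Phi> 1)" using n2 by (intro neg_shape(2)[OF st \<Phi>2 e]) simp
    have "(\<Sum>j\<in>{1..n}. \<bar>\<Phi> j\<bar>) = (\<Sum>j\<in>{1..n}. \<bar>\<Phi> 1 + 2 * (int j - 1)\<bar>)"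
    proof (rule sum.cong[OF refl])
      fix j assume "j \<in> {1..n}"
      with sh have "\<Phi> j = \<Phi> 1 + 2 * (int j - 1)" by blast
      then show "\<bar>\<Phi> j\<bar> = \<bar>\<Phi> 1 + 2 * (int j - 1)\<bar>" by (rule arg_cong)
    qed
    also have "\<dots> = F n (\<Phi> 1)" by (rule sum_F)
    finally have f1: "F n (\<Phi> 1) \<le> int k" using \<Phi>3 by simp
    have f2: "int n * int n \<le> 2 * F n (\<Phi> 1)" using F_lower[OF o] .
    have f3: "2 * F n C0 \<le> int n * int n + 1" using F_upper[of n] unfolding C0_def .
    from f1 f2 f3 have "F n C0 \<le> int k" by linarith
    then show ?thesis unfolding N_def by simp
  qed
  have dist: "ofg_dist n \<mu> (- \<mu>) = N"
    unfolding ofg_dist_def by (rule Least_equality) (use pth lowb in auto)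
  have lo: "int n * int n \<le> 2 * F n C0" using F_lower[OF oC0] .
  have hi: "2 * F n C0 \<le> int n * int n + 1" using F_upper[of n] unfolding C0_def .
  have rlo: "real n * real n \<le> 2 * real_of_int (F n C0)"
  proof -
    have "real_of_int (int n * int n) \<le> real_of_int (2 * F n C0)" using lo by (simp only: of_int_le_iff)
    then show ?thesis by simp
  qed
  have rhi: "2 * real_of_int (F n C0) \<le> real n * real n + 1"
  proof -
    have "real_of_int (2 * F n C0) \<le> real_of_int (int n * int n + 1)" using hi by (simp only: of_int_le_iff)
    then show ?thesis by simp
  qed
  have sq: "(real n)^2 = real n * real n" by (simp add: power2_eq_square)
  have g1: "real_of_int (F n C0) - 1 < (real n)^2 / 2" unfolding sq using rhi by linarith
  have g2: "(real n)^2 / 2 \<le> real_of_int (F n C0)" unfolding sq using rlo by linarith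
  have "\<lceil>(real n)^2 / 2\<rceil> = F n C0" by (rule ceiling_unique[OF g1 g2])
  then have "nat \<lceil>(real n)^2 / 2\<rceil> = N" unfolding N_def by simp
  then show ?thesis using pth dist by auto
qed

definition isT :: "(nat \<Rightarrow> int) \<Rightarrow> nat \<Rightarrow> bool" where "isT \<mu> k = (\<mu> (3*k-1) \<noteq> \<mu> (3*k-3))"
definition isR :: "(nat \<Rightarrow> int) \<Rightarrow> nat \<Rightarrow> bool" where "isR \<mu> k = (\<mu> (3*k) \<noteq> \<mu> (3*k-3))"
definition isB :: "(nat \<Rightarrow> int) \<Rightarrow> nat \<Rightarrow> bool" where "isB \<mu> k = (\<mu> (3*k+1) \<noteq> \<mu> (3*k-3))"

lemma vcore2:
  fixes l t r b :: int
  assumes l: "l = 1 \<or> l = -1" and t: "t = 1 \<or> t = -1" and r: "r = 1 \<or> r = -1" and b: "b = 1 \<or> b = -1"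
    and one: "of_bool (t \<noteq> l) + of_bool (r \<noteq> l) + of_bool (b \<noteq> l) = (1::nat)"
    and pat: "(\<not>fL \<and> \<not>fT \<and> \<not>fR \<and> \<not>fB) \<or> (fL \<and> fT \<and> \<not>fR \<and> \<not>fB \<and> t = l) \<or> (fL \<and> \<not>fT \<and> \<not>fR \<and> fB \<and> b = l)
       \<or> (\<not>fL \<and> fT \<and> fR \<and> \<not>fB \<and> b = l) \<or> (\<not>fL \<and> \<not>fT \<and> fR \<and> fB \<and> t = l)"
  shows "of_bool ((if fT then -t else t) \<noteq> (if fL then -l else l)) + of_bool ((if fR then -r else r) \<noteq> (if fL then -l else l))
     + of_bool ((if fB then -b else b) \<noteq> (if fL then -l else l)) = (1::nat)"
  using pat
proof (elim disjE)
qed (use l t r b one in \<open>(elim disjE; simp)+\<close>)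

lemma vertex_creases:
  assumes k: "1 \<le> k" "k \<le> n-1"
  shows "3*k-3 \<in> creases n" "3*k-1 \<in> creases n" "3*k \<in> creases n" "3*k+1 \<in> creases n"
proof -
  obtain m where m: "k = Suc m" using k by (cases k) auto
  show "3*k-3 \<in> creases n" using cr_0[of m n] k m by simp
  show "3*k-1 \<in> creases n" using cr_2[of m n] k m by simp
  show "3*k \<in> creases n" using cr_0[of k n] k by simp
  show "3*k+1 \<in> creases n" using cr_1[of k n] k by simp
qed

lemma vertex_one:
  assumes lv: "locally_valid n \<mu>" and k: "1 \<le> k" "k \<le> n-1"
  shows "of_bool (isT \<mu> k) + of_bool (isR \<mu> k) + of_bool (isB \<mu> k) = (1::nat)"
proof -
  have "card {e\<in>{3*k-1, 3*k, 3*k+1}. \<mu> e \<noteq> \<mu> (3*k-3)} = 1" using lv k by (auto simp: locally_valid_def)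
  moreover have "card {e\<in>{3*k-1, 3*k, 3*k+1}. \<mu> e \<noteq> \<mu> (3*k-3)} =
     of_bool (\<mu> (3*k-1) \<noteq> \<mu> (3*k-3)) + of_bool (\<mu> (3*k) \<noteq> \<mu> (3*k-3)) + of_bool (\<mu> (3*k+1) \<noteq> \<mu> (3*k-3))"
    using k by (intro card3) auto
  ultimately show ?thesis by (simp add: isT_def isR_def isB_def)
qed

lemma flip_valid:
  assumes lv: "locally_valid n \<mu>" and f: "(i,j) \<in> faces n"
    and C: "\<forall>k\<in>{1..n-1}. (j = k \<longrightarrow> (if i = 1 then \<not> isT \<mu> k else \<not> isB \<mu> k))
              \<and> (j = Suc k \<longrightarrow> (if i = 1 then \<not> isB \<mu> k else \<not> isT \<mu> k))"
  shows "flippable n \<mu> (i,j)"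
proof -
  have i: "i = 1 \<or> i = 2" and j: "1 \<le> j" "j \<le> n" using f by (auto simp: faces_def)
  have mv: "mv_assignment n \<mu>" using lv by (simp add: locally_valid_def)
  define \<nu> where "\<nu> = face_flip n (i,j) \<mu>"
  have mv': "mv_assignment n \<nu>"
    using mv unfolding mv_assignment_def \<nu>_def face_flip_def by auto
  have vk: "card {e\<in>{3*k-1, 3*k, 3*k+1}. \<nu> e \<noteq> \<nu> (3*k-3)} = 1" if k: "k \<in> {1..n-1}" for k
  proof -
    obtain m where m: "k = Suc m" using k by (cases k) auto
    have k1: "1 \<le> k" "k \<le> n-1" using k by auto
    have pm: "\<mu> c = 1 \<or> \<mu> c = -1" if "c \<in> creases n" for c using mv that by (auto simp: mv_assignment_def)
    note vc = vertex_creases[OF k1]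
    have a0: "3*k-3 \<in> face_creases n (i,j) \<longleftrightarrow> j = k"
      using fc_0[OF j(1), of m n i] m by simp
    have a1: "3*k-1 \<in> face_creases n (i,j) \<longleftrightarrow> i = 1 \<and> (j = k \<or> j = Suc k)"
      using fc_2[OF j(1), of m n i] m k1 by auto
    have a2: "3*k \<in> face_creases n (i,j) \<longleftrightarrow> j = Suc k"
      using fc_0[OF j(1), of k n i] by simp
    have a3: "3*k+1 \<in> face_creases n (i,j) \<longleftrightarrow> i \<noteq> 1 \<and> (j = k \<or> j = Suc k)"
      using fc_1[OF j(1), of k n i] k1 by auto
    have cd: "card {e\<in>{3*k-1, 3*k, 3*k+1}. \<nu> e \<noteq> \<nu> (3*k-3)} =
     of_bool (\<nu> (3*k-1) \<noteq> \<nu> (3*k-3)) + of_bool (\<nu> (3*k) \<noteq> \<nu> (3*k-3)) + of_bool (\<nu> (3*k+1) \<noteq> \<nu> (3*k-3))"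
      using k1 by (intro card3) auto
    have one: "of_bool (\<mu> (3*k-1) \<noteq> \<mu> (3*k-3)) + of_bool (\<mu> (3*k) \<noteq> \<mu> (3*k-3)) + of_bool (\<mu> (3*k+1) \<noteq> \<mu> (3*k-3)) = (1::nat)"
      using vertex_one[OF lv k1] by (simp add: isT_def isR_def isB_def)
    have Ck: "(j = k \<longrightarrow> (if i = 1 then \<not> isT \<mu> k else \<not> isB \<mu> k))
              \<and> (j = Suc k \<longrightarrow> (if i = 1 then \<not> isB \<mu> k else \<not> isT \<mu> k))" using C k by blast
    have pat: "(\<not>(j = k) \<and> \<not>(i = 1 \<and> (j = k \<or> j = Suc k)) \<and> \<not>(j = Suc k) \<and> \<not>(i \<noteq> 1 \<and> (j = k \<or> j = Suc k)))
      \<or> ((j = k) \<and> (i = 1 \<and> (j = k \<or> j = Suc k)) \<and> \<not>(j = Suc k) \<and> \<not>(i \<noteq> 1 \<and> (j = k \<or> j = Suc k)) \<and> \<mu> (3*k-1) = \<mu> (3*k-3))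
      \<or> ((j = k) \<and> \<not>(i = 1 \<and> (j = k \<or> j = Suc k)) \<and> \<not>(j = Suc k) \<and> (i \<noteq> 1 \<and> (j = k \<or> j = Suc k)) \<and> \<mu> (3*k+1) = \<mu> (3*k-3))
      \<or> (\<not>(j = k) \<and> (i = 1 \<and> (j = k \<or> j = Suc k)) \<and> (j = Suc k) \<and> \<not>(i \<noteq> 1 \<and> (j = k \<or> j = Suc k)) \<and> \<mu> (3*k+1) = \<mu> (3*k-3))
      \<or> (\<not>(j = k) \<and> \<not>(i = 1 \<and> (j = k \<or> j = Suc k)) \<and> (j = Suc k) \<and> (i \<noteq> 1 \<and> (j = k \<or> j = Suc k)) \<and> \<mu> (3*k-1) = \<mu> (3*k-3))"
    proof (cases "j = k")
      case True
      show ?thesis using i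
      proof (elim disjE)
        assume i1: "i = 1"
        with Ck True have "\<mu> (3*k-1) = \<mu> (3*k-3)" by (simp add: isT_def)
        then show ?thesis using True i1 by simp
      next
        assume i2: "i = 2"
        with Ck True have "\<mu> (3*k+1) = \<mu> (3*k-3)" by (simp add: isB_def)
        then show ?thesis using True i2 by simp
      qed
    next
      case False
      show ?thesis
      proof (cases "j = Suc k")
        case True
        show ?thesis using i
        proof (elim disjE)
          assume i1: "i = 1"
          with Ck True have "\<mu> (3*k+1) = \<mu> (3*k-3)" by (simp add: isB_def)
          then show ?thesis using True i1 by simp
        next
          assume i2: "i = 2"
          with Ck True have "\<mu> (3*k-1) = \<mu> (3*k-3)" by (simp add: isT_def)
          then show ?thesis using True i2 by simp
        qed
      next
        case False2: False
        then show ?thesis using False by simp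
      qed
    qed
    have "of_bool (\<nu> (3*k-1) \<noteq> \<nu> (3*k-3)) + of_bool (\<nu> (3*k) \<noteq> \<nu> (3*k-3)) + of_bool (\<nu> (3*k+1) \<noteq> \<nu> (3*k-3)) = (1::nat)"
      unfolding \<nu>_def face_flip_def a0 a1 a2 a3
      by (rule vcore2[OF pm[OF vc(1)] pm[OF vc(2)] pm[OF vc(3)] pm[OF vc(4)] one pat])
    then show ?thesis using cd by simp
  qed
  have "locally_valid n \<nu>" unfolding locally_valid_def using mv' vk by blast
  then show ?thesis unfolding flippable_def \<nu>_def using f lv by simp
qed


lemma fl11: "locally_valid n \<mu> \<Longrightarrow> n \<ge> 2 \<Longrightarrow> \<not> isT \<mu> 1 \<Longrightarrow> flippable n \<mu> (1,1)"
  by (rule flip_valid) (auto simp: faces_def)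
lemma fl21: "locally_valid n \<mu> \<Longrightarrow> n \<ge> 2 \<Longrightarrow> \<not> isB \<mu> 1 \<Longrightarrow> flippable n \<mu> (2,1)"
  by (rule flip_valid) (auto simp: faces_def)
lemma fl1n: "locally_valid n \<mu> \<Longrightarrow> n \<ge> 2 \<Longrightarrow> \<not> isB \<mu> (n-1) \<Longrightarrow> flippable n \<mu> (1,n)"
  by (rule flip_valid) (auto simp: faces_def)
lemma fl2n: "locally_valid n \<mu> \<Longrightarrow> n \<ge> 2 \<Longrightarrow> \<not> isT \<mu> (n-1) \<Longrightarrow> flippable n \<mu> (2,n)"
  by (rule flip_valid) (auto simp: faces_def)
lemma fl1j: "locally_valid n \<mu> \<Longrightarrow> 2 \<le> j \<Longrightarrow> j \<le> n-1 \<Longrightarrow> \<not> isB \<mu> (j-1) \<Longrightarrow> \<not> isT \<mu> j \<Longrightarrow> flippable n \<mu> (1,j)"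
  by (rule flip_valid) (auto simp: faces_def)
lemma fl2j: "locally_valid n \<mu> \<Longrightarrow> 2 \<le> j \<Longrightarrow> j \<le> n-1 \<Longrightarrow> \<not> isT \<mu> (j-1) \<Longrightarrow> \<not> isB \<mu> j \<Longrightarrow> flippable n \<mu> (2,j)"
  by (rule flip_valid) (auto simp: faces_def)

lemma ex1:
  assumes "locally_valid n \<mu>" "1 \<le> k" "k \<le> n-1"
  shows "(isT \<mu> k \<and> \<not> isR \<mu> k \<and> \<not> isB \<mu> k) \<or> (\<not> isT \<mu> k \<and> isR \<mu> k \<and> \<not> isB \<mu> k) \<or> (\<not> isT \<mu> k \<and> \<not> isR \<mu> k \<and> isB \<mu> k)"
  using vertex_one[OF assms]
  by (cases "isT \<mu> k"; cases "isR \<mu> k"; cases "isB \<mu> k") simp_all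

lemma card_ge3: "finite S \<Longrightarrow> a \<in> S \<Longrightarrow> b \<in> S \<Longrightarrow> c \<in> S \<Longrightarrow> a \<noteq> b \<Longrightarrow> a \<noteq> c \<Longrightarrow> b \<noteq> c \<Longrightarrow> 3 \<le> card S"
proof -
  assume "finite S" "a \<in> S" "b \<in> S" "c \<in> S" "a \<noteq> b" "a \<noteq> c" "b \<noteq> c"
  then have "card {a,b,c} \<le> card S" by (intro card_mono) auto
  moreover have "card {a,b,c} = 3" using \<open>a \<noteq> b\<close> \<open>a \<noteq> c\<close> \<open>b \<noteq> c\<close> by simp
  ultimately show ?thesis by simp
qed

lemma deg2:
  assumes n2: "n \<ge> 2" and lv: "locally_valid n \<mu>" and c2: "card {f \<in> faces n. flippable n \<mu> f} = 2"
  shows "(\<forall>k\<in>{1..n-1}. isT \<mu> k) \<or> (\<forall>k\<in>{1..n-1}. isB \<mu> k)"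
proof (rule ccontr)
  assume "\<not> ?thesis"
  then have nT: "\<exists>k. k \<in> {1..n-1} \<and> \<not> isT \<mu> k" and nB: "\<exists>k. k \<in> {1..n-1} \<and> \<not> isB \<mu> k" by auto
  define S where "S = {f \<in> faces n. flippable n \<mu> f}"
  have fS: "finite S" unfolding S_def faces_def by simp
  have inS: "f \<in> S" if "flippable n \<mu> f" for f using that unfolding S_def flippable_def by simp
  have v1: "1 \<le> (1::nat)" "1 \<le> n-1" using n2 by auto
  have vn: "1 \<le> n-1" "n-1 \<le> n-1" using n2 by auto
  obtain g where g: "g \<in> S" "snd g = n"
  proof (cases "isB \<mu> (n-1)")
    case True
    then have "\<not> isT \<mu> (n-1)" using ex1[OF lv vn] by auto
    then show ?thesis using that[of "(2,n)"] inS fl2n[OF lv n2] by simp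
  next
    case False
    then show ?thesis using that[of "(1,n)"] inS fl1n[OF lv n2] by simp
  qed
  have "3 \<le> card S"
  proof -
    consider "isT \<mu> 1 \<and> \<not> isR \<mu> 1 \<and> \<not> isB \<mu> 1" | "\<not> isT \<mu> 1 \<and> isR \<mu> 1 \<and> \<not> isB \<mu> 1" | "\<not> isT \<mu> 1 \<and> \<not> isR \<mu> 1 \<and> isB \<mu> 1"
      using ex1[OF lv v1] by blast
    then show ?thesis
    proof cases
      case 1
      define k where "k = (LEAST k. k \<in> {1..n-1} \<and> \<not> isT \<mu> k)"
      have k: "k \<in> {1..n-1} \<and> \<not> isT \<mu> k" unfolding k_def using nT by (rule LeastI_ex)
      have kmin: "\<And>k'. k' < k \<Longrightarrow> \<not> (k' \<in> {1..n-1} \<and> \<not> isT \<mu> k')" unfolding k_def by (rule not_less_Least)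
      have k2: "2 \<le> k" using k 1 by (cases "k = 1") auto
      have km: "1 \<le> k-1" "k-1 \<le> n-1" using k k2 by auto
      have "isT \<mu> (k-1)" using kmin[of "k-1"] k k2 by auto
      then have "\<not> isB \<mu> (k-1)" using ex1[OF lv km] by auto
      then have fa: "flippable n \<mu> (1,k)" using fl1j[OF lv k2] k by auto
      have fb: "flippable n \<mu> (2,1)" using fl21[OF lv n2] 1 by simp
      show ?thesis
        by (rule card_ge3[OF fS inS[OF fa] inS[OF fb] g(1)]) (use g(2) k k2 n2 in auto)
    next
      case 2
      have fa: "flippable n \<mu> (1,1)" using fl11[OF lv n2] 2 by simp
      have fb: "flippable n \<mu> (2,1)" using fl21[OF lv n2] 2 by simp
      show ?thesis
        by (rule card_ge3[OF fS inS[OF fa] inS[OF fb] g(1)]) (use g(2) n2 in auto)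
    next
      case 3
      define k where "k = (LEAST k. k \<in> {1..n-1} \<and> \<not> isB \<mu> k)"
      have k: "k \<in> {1..n-1} \<and> \<not> isB \<mu> k" unfolding k_def using nB by (rule LeastI_ex)
      have kmin: "\<And>k'. k' < k \<Longrightarrow> \<not> (k' \<in> {1..n-1} \<and> \<not> isB \<mu> k')" unfolding k_def by (rule not_less_Least)
      have k2: "2 \<le> k" using k 3 by (cases "k = 1") auto
      have km: "1 \<le> k-1" "k-1 \<le> n-1" using k k2 by auto
      have "isB \<mu> (k-1)" using kmin[of "k-1"] k k2 by auto
      then have "\<not> isT \<mu> (k-1)" using ex1[OF lv km] by auto
      then have fa: "flippable n \<mu> (2,k)" using fl2j[OF lv k2] k by auto
      have fb: "flippable n \<mu> (1,1)" using fl11[OF lv n2] 3 by simp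
      show ?thesis
        by (rule card_ge3[OF fS inS[OF fa] inS[OF fb] g(1)]) (use g(2) k k2 n2 in auto)
    qed
  qed
  then show False using c2 S_def by simp
qed

lemma startc_of:
  assumes lv: "locally_valid n \<mu>" and all: "(\<forall>k\<in>{1..n-1}. isT \<mu> k) \<or> (\<forall>k\<in>{1..n-1}. isB \<mu> k)"
  shows "\<exists>tp. startc tp n \<mu>"
proof -
  have mv: "mv_assignment n \<mu>" using lv by (simp add: locally_valid_def)
  have pm: "\<mu> c = 1 \<or> \<mu> c = -1" if "c \<in> creases n" for c using mv that by (auto simp: mv_assignment_def)
  have neg: "\<mu> a \<noteq> \<mu> b \<Longrightarrow> a \<in> creases n \<Longrightarrow> b \<in> creases n \<Longrightarrow> \<mu> a = - \<mu> b" for a b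
    using pm[of a] pm[of b] by auto
  show ?thesis
  proof (cases "\<forall>k\<in>{1..n-1}. isT \<mu> k")
    case True
    have "\<forall>k\<in>{1..n-1}. \<mu> (3*k-1) = (if True then - \<mu> (3*k-3) else \<mu> (3*k-3)) \<and> \<mu> (3*k) = \<mu> (3*k-3) \<and>
        \<mu> (3*k+1) = (if True then \<mu> (3*k-3) else - \<mu> (3*k-3))"
    proof
      fix k assume k: "k \<in> {1..n-1}"
      then have k1: "1 \<le> k" "k \<le> n-1" by auto
      have "isT \<mu> k" using True k by blast
      then have "\<not> isR \<mu> k" "\<not> isB \<mu> k" using ex1[OF lv k1] by auto
      then show "\<mu> (3*k-1) = (if True then - \<mu> (3*k-3) else \<mu> (3*k-3)) \<and> \<mu> (3*k) = \<mu> (3*k-3) \<and>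
        \<mu> (3*k+1) = (if True then \<mu> (3*k-3) else - \<mu> (3*k-3))"
        using \<open>isT \<mu> k\<close> neg vertex_creases[OF k1] by (simp add: isT_def isR_def isB_def)
    qed
    then have "startc True n \<mu>" unfolding startc_def using mv by blast
    then show ?thesis by blast
  next
    case False
    then have B: "\<forall>k\<in>{1..n-1}. isB \<mu> k" using all by blast
    have "\<forall>k\<in>{1..n-1}. \<mu> (3*k-1) = (if False then - \<mu> (3*k-3) else \<mu> (3*k-3)) \<and> \<mu> (3*k) = \<mu> (3*k-3) \<and>
        \<mu> (3*k+1) = (if False then \<mu> (3*k-3) else - \<mu> (3*k-3))"
    proof
      fix k assume k: "k \<in> {1..n-1}"
      then have k1: "1 \<le> k" "k \<le> n-1" by auto
      have "isB \<mu> k" using B k by blast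
      then have "\<not> isR \<mu> k" "\<not> isT \<mu> k" using ex1[OF lv k1] by auto
      then show "\<mu> (3*k-1) = (if False then - \<mu> (3*k-3) else \<mu> (3*k-3)) \<and> \<mu> (3*k) = \<mu> (3*k-3) \<and>
        \<mu> (3*k+1) = (if False then \<mu> (3*k-3) else - \<mu> (3*k-3))"
        using \<open>isB \<mu> k\<close> neg vertex_creases[OF k1] by (simp add: isT_def isR_def isB_def)
    qed
    then have "startc False n \<mu>" unfolding startc_def using mv by blast
    then show ?thesis by blast
  qed
qed

theorem theorem5p5:
  fixes n :: nat and \<mu> :: "nat \<Rightarrow> int"
  assumes "n \<ge> 2"
    and "locally_valid n \<mu>"
    and "card {f \<in> faces n. flippable n \<mu> f} = 2"
  shows "(\<exists>k. (\<mu>, - \<mu>) \<in> ofg_edges n ^^ k)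
         \<and> ofg_dist n \<mu> (- \<mu>) = nat \<lceil>(real n)^2 / 2\<rceil>"
proof -
  obtain tp where "startc tp n \<mu>" using startc_of[OF assms(2) deg2[OF assms]] by blast
  then show ?thesis by (rule main_tp[OF assms(1)])
qed

end
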